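(* Let $r\ge5$. If $T$ is a $K_r$-tree then $\langle T\rangle_{K_r}=T$, i.e., $T$ is $K_r$-stable.
   Context: A graph $T$ is a $K_r$-tree of order $\vartheta$ if it is the union of $\vartheta$ copies $H_1,\dots,H_\vartheta$ of $K_r$ such that, for every $1<i\le\vartheta$, $H_i$ shares exactly one edge with $H_1\cup\cdots\cup H_{i-1}$ (the common vertices being exactly the two endpoints of that edge). For a graph $G$, the $K_r$-dynamics repeatedly adds an edge $e$ between two vertices of $G$ whenever there is a copy of $K_r$ in which $e$ is the only edge not yet present; $\langle G\rangle_{K_r}$ is the final graph. *)

theory Defs
  imports Main
begin

text \<open>Simple graphs are given by a vertex set V :: 'a set and an edge set
  E :: 'a set set, every edge being a 2-element subset of V.\<close>

definition pairs_of :: "'a set \<Rightarrow> 'a set set" where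
  "pairs_of S = {e. e \<subseteq> S \<and> card e = 2}"

text \<open>A copy of K_r is determined by its r-element vertex set H; its edges are pairs_of H.
  A K_r-tree of order theta: union of theta copies H_1..H_theta of K_r (here the list Hs,
  indexed from 0) such that each H_i (i > 0) shares exactly one edge with the union of the
  previous copies, the common vertices being exactly the two endpoints of that edge.\<close>

definition Kr_tree :: "nat \<Rightarrow> nat \<Rightarrow> 'a set \<Rightarrow> 'a set set \<Rightarrow> bool" where
  "Kr_tree r \<theta> V E \<longleftrightarrow> (\<exists>Hs :: 'a set list.
      length Hs = \<theta> \<and> \<theta> \<ge> 1 \<and>
      (\<forall>H \<in> set Hs. finite H \<and> card H = r) \<and>
      V = \<Union>(set Hs) \<and> E = \<Union>(pairs_of ` set Hs) \<and>
      (\<forall>i. 0 < i \<and> i < \<theta> \<longrightarrow>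
         (\<exists>u v. u \<noteq> v \<and>
            pairs_of (Hs ! i) \<inter> \<Union>(pairs_of ` set (take i Hs)) = {{u, v}} \<and>
            Hs ! i \<inter> \<Union>(set (take i Hs)) = {u, v})))"

inductive_set Kr_closure :: "nat \<Rightarrow> 'a set \<Rightarrow> 'a set set \<Rightarrow> 'a set set"
  for r :: nat and V :: "'a set" and E :: "'a set set" where
  base: "e \<in> E \<Longrightarrow> e \<in> Kr_closure r V E"
| step: "\<lbrakk> S \<subseteq> V; finite S; card S = r; e \<in> pairs_of S;
           \<forall>f \<in> pairs_of S - {e}. f \<in> Kr_closure r V E \<rbrakk>
         \<Longrightarrow> e \<in> Kr_closure r V E"

end

theory Submission
  imports Defs
begin

lemma pair_in_pairs_of: "x \<noteq> y \<Longrightarrow> ({x, y} \<in> pairs_of S) = (x \<in> S \<and> y \<in> S)"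
  by (auto simp: pairs_of_def)

lemma pairs_of_sub: "e \<in> pairs_of S \<Longrightarrow> e \<subseteq> S"
  by (auto simp: pairs_of_def)

lemma clique_in_copy:
  assumes "\<forall>i. 0 < i \<and> i < length Hs \<longrightarrow>
         (\<exists>u v. u \<noteq> v \<and>
            pairs_of (Hs ! i) \<inter> \<Union>(pairs_of ` set (take i Hs)) = {{u, v}} \<and>
            Hs ! i \<inter> \<Union>(set (take i Hs)) = {u, v})"
    and "a \<in> K" "b \<in> K" "a \<noteq> b"
    and "\<forall>x\<in>K. \<forall>y\<in>K. x \<noteq> y \<longrightarrow> {x, y} \<in> \<Union>(pairs_of ` set Hs)"
  shows "\<exists>H\<in>set Hs. K \<subseteq> H"
  using assms
proof (induction Hs arbitrary: K rule: rev_induct)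
  case Nil
  then show ?case by auto
next
  case (snoc H xs)
  show ?case
  proof (cases "K \<subseteq> H")
    case True then show ?thesis by auto
  next
    case False
    then obtain y where y: "y \<in> K" "y \<notin> H" by auto
    have ex: "\<exists>x\<in>K. x \<noteq> y" using snoc.prems(2-4) by metis
    have inxs: "{x, y} \<in> \<Union>(pairs_of ` set xs)" if "x \<in> K" "x \<noteq> y" for x
    proof -
      have "{x, y} \<in> \<Union>(pairs_of ` set (xs @ [H]))" using snoc.prems(5) that y by auto
      moreover have "{x, y} \<notin> pairs_of H" using pair_in_pairs_of[of x y H] that y by auto
      ultimately show ?thesis by auto
    qed
    have xsne: "xs \<noteq> []" using ex inxs by force
    have KV: "K \<subseteq> \<Union>(set xs)"
    proof
      fix x assume x: "x \<in> K"
      show "x \<in> \<Union>(set xs)"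
      proof (cases "x = y")
        case True
        obtain z where "z \<in> K" "z \<noteq> y" using ex by auto
        then have "{z, y} \<in> \<Union>(pairs_of ` set xs)" using inxs by auto
        then show ?thesis using True pairs_of_sub by fastforce
      next
        case False
        then have "{x, y} \<in> \<Union>(pairs_of ` set xs)" using inxs x by auto
        then show ?thesis using pairs_of_sub by fastforce
      qed
    qed
    obtain u v where uv: "u \<noteq> v"
      "pairs_of H \<inter> \<Union>(pairs_of ` set xs) = {{u, v}}"
      "H \<inter> \<Union>(set xs) = {u, v}"
      using snoc.prems(1)[rule_format, of "length xs"] xsne by auto
    have cl: "\<forall>x\<in>K. \<forall>y\<in>K. x \<noteq> y \<longrightarrow> {x, y} \<in> \<Union>(pairs_of ` set xs)"
    proof (intro ballI impI)
      fix x z assume xz: "x \<in> K" "z \<in> K" "x \<noteq> z"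
      have "{x, z} \<in> \<Union>(pairs_of ` set (xs @ [H]))" using snoc.prems(5) xz by auto
      then consider "{x, z} \<in> \<Union>(pairs_of ` set xs)" | "{x, z} \<in> pairs_of H" by auto
      then show "{x, z} \<in> \<Union>(pairs_of ` set xs)"
      proof cases
        case 1 then show ?thesis .
      next
        case 2
        then have "x \<in> H" "z \<in> H" using pair_in_pairs_of[OF xz(3)] by auto
        then have "x \<in> {u, v}" "z \<in> {u, v}" using uv(3) KV xz by auto
        then have "{x, z} = {u, v}" using xz(3) by auto
        then show ?thesis using uv(2) by auto
      qed
    qed
    have "\<forall>i. 0 < i \<and> i < length xs \<longrightarrow>
         (\<exists>u v. u \<noteq> v \<and>
            pairs_of (xs ! i) \<inter> \<Union>(pairs_of ` set (take i xs)) = {{u, v}} \<and>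
            xs ! i \<inter> \<Union>(set (take i xs)) = {u, v})"
    proof (intro allI impI)
      fix i assume i: "0 < i \<and> i < length xs"
      then have "(xs @ [H]) ! i = xs ! i" "take i (xs @ [H]) = take i xs"
        by (auto simp: nth_append)
      then show "\<exists>u v. u \<noteq> v \<and>
            pairs_of (xs ! i) \<inter> \<Union>(pairs_of ` set (take i xs)) = {{u, v}} \<and>
            xs ! i \<inter> \<Union>(set (take i xs)) = {u, v}"
        using snoc.prems(1)[rule_format, of i] i by auto
    qed
    then have "\<exists>H\<in>set xs. K \<subseteq> H" using snoc.IH[of K] cl snoc.prems(2-4) by blast
    then show ?thesis by auto
  qed
qed

theorem lemma4p13:
  fixes r \<theta> :: nat and V :: "'a set" and E :: "'a set set"
  assumes "r \<ge> 5" and "Kr_tree r \<theta> V E"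
  shows "Kr_closure r V E = E"
proof -
  obtain Hs :: "'a set list" where Hs:
      "length Hs = \<theta>" "\<theta> \<ge> 1"
      "\<forall>H \<in> set Hs. finite H \<and> card H = r"
      "V = \<Union>(set Hs)" "E = \<Union>(pairs_of ` set Hs)"
      "\<forall>i. 0 < i \<and> i < length Hs \<longrightarrow>
         (\<exists>u v. u \<noteq> v \<and>
            pairs_of (Hs ! i) \<inter> \<Union>(pairs_of ` set (take i Hs)) = {{u, v}} \<and>
            Hs ! i \<inter> \<Union>(set (take i Hs)) = {u, v})"
    using assms(2) unfolding Kr_tree_def by blast
  have small: "card (Hs ! i \<inter> Hs ! j) \<le> 2" if "i < j" "j < length Hs" for i j
  proof -
    have j0: "0 < j \<and> j < length Hs" using that by auto
    obtain u v where "Hs ! j \<inter> \<Union>(set (take j Hs)) = {u, v}"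
      using Hs(6)[rule_format, OF j0] by (elim exE conjE) simp
    moreover have "Hs ! i \<in> set (take j Hs)"
    proof -
      have "take j Hs ! i = Hs ! i" "i < length (take j Hs)" using that by auto
      then show ?thesis by (metis nth_mem)
    qed
    ultimately have "Hs ! i \<inter> Hs ! j \<subseteq> {u, v}" by blast
    then have "card (Hs ! i \<inter> Hs ! j) \<le> card {u, v}" by (intro card_mono) auto
    also have "\<dots> \<le> 2" by (simp add: card_insert_le_m1)
    finally show ?thesis .
  qed
  have same: "H1 = H2" if sH: "H1 \<in> set Hs" "H2 \<in> set Hs" "card (H1 \<inter> H2) \<ge> 3" for H1 H2
  proof -
    obtain i where i: "i < length Hs" "H1 = Hs ! i"
      using sH(1) unfolding in_set_conv_nth by blast
    obtain j where j: "j < length Hs" "H2 = Hs ! j"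
      using sH(2) unfolding in_set_conv_nth by blast
    note ij = i(1) j(1) i(2) j(2)
    consider "i < j" | "i = j" | "j < i" by arith
    then show ?thesis
    proof cases
      case 1 then show ?thesis using small[of i j] ij sH(3) by simp
    next
      case 2 then show ?thesis using ij by auto
    next
      case 3 then show ?thesis using small[of j i] ij sH(3) by (simp add: Int_commute)
    qed
  qed
  have "e \<in> E" if "e \<in> Kr_closure r V E" for e
    using that
  proof (induction rule: Kr_closure.induct)
    case (base e) then show ?case .
  next
    case (step S e)
    obtain a b where ab: "e = {a, b}" "a \<noteq> b" "a \<in> S" "b \<in> S"
      using step.hyps(4) unfolding pairs_of_def by (auto simp: card_2_iff)
    have inE: "{x, y} \<in> E" if "x \<in> S" "y \<in> S" "x \<noteq> y" "{x, y} \<noteq> e" for x y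
      using step.IH that pair_in_pairs_of[of x y S] by auto
    have fin: "finite S" by fact
    have cS: "card S = r" by fact
    have c1: "card (S - {a}) = r - 1" using ab fin cS by auto
    have c2: "card (S - {b}) = r - 1" using ab fin cS by auto
    have c3: "card (S - {a, b}) = r - 2" using ab fin cS by (auto simp: card_Diff_subset)
    have two: "\<exists>x\<in>A. \<exists>y\<in>A. x \<noteq> y" if cA: "card A \<ge> 2" for A :: "'a set"
    proof -
      have "finite A" using cA card.infinite by fastforce
      then obtain B where "B \<subseteq> A" "card B = 2" using cA obtain_subset_with_card_n by metis
      then show ?thesis by (auto simp: card_2_iff)
    qed
    have "\<exists>H\<in>set Hs. S - {a} \<subseteq> H"
    proof -
      have "card (S - {a}) \<ge> 2" using c1 assms(1) by simp
      then obtain x y where "x \<in> S - {a}" "y \<in> S - {a}" "x \<noteq> y" using two by blast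
      moreover have "\<forall>x\<in>S - {a}. \<forall>y\<in>S - {a}. x \<noteq> y \<longrightarrow> {x, y} \<in> \<Union>(pairs_of ` set Hs)"
      proof (intro ballI impI)
        fix x y assume xy: "x \<in> S - {a}" "y \<in> S - {a}" "x \<noteq> y"
        have "a \<in> e" using ab by simp
        moreover have "a \<notin> {x, y}" using xy by blast
        ultimately have "{x, y} \<noteq> e" by blast
        then have "{x, y} \<in> E" using inE[of x y] xy by blast
        then show "{x, y} \<in> \<Union>(pairs_of ` set Hs)" using Hs(5) by simp
      qed
      ultimately show ?thesis by (rule clique_in_copy[OF Hs(6)])
    qed
    then obtain H1 where H1: "H1 \<in> set Hs" "S - {a} \<subseteq> H1" by auto
    have "\<exists>H\<in>set Hs. S - {b} \<subseteq> H"
    proof -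
      have "card (S - {b}) \<ge> 2" using c2 assms(1) by simp
      then obtain x y where "x \<in> S - {b}" "y \<in> S - {b}" "x \<noteq> y" using two by blast
      moreover have "\<forall>x\<in>S - {b}. \<forall>y\<in>S - {b}. x \<noteq> y \<longrightarrow> {x, y} \<in> \<Union>(pairs_of ` set Hs)"
      proof (intro ballI impI)
        fix x y assume xy: "x \<in> S - {b}" "y \<in> S - {b}" "x \<noteq> y"
        have "b \<in> e" using ab by simp
        moreover have "b \<notin> {x, y}" using xy by blast
        ultimately have "{x, y} \<noteq> e" by blast
        then have "{x, y} \<in> E" using inE[of x y] xy by blast
        then show "{x, y} \<in> \<Union>(pairs_of ` set Hs)" using Hs(5) by simp
      qed
      ultimately show ?thesis by (rule clique_in_copy[OF Hs(6)])
    qed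
    then obtain H2 where H2: "H2 \<in> set Hs" "S - {b} \<subseteq> H2" by auto
    have "S - {a, b} \<subseteq> H1 \<inter> H2" using H1 H2 by auto
    moreover have "finite (H1 \<inter> H2)" using Hs(3) H1 by auto
    ultimately have "card (S - {a, b}) \<le> card (H1 \<inter> H2)" by (rule card_mono[rotated])
    then have "card (H1 \<inter> H2) \<ge> 3" using c3 assms(1) by linarith
    then have "H1 = H2" using same[OF H1(1) H2(1)] by simp
    then have "a \<in> H1" "b \<in> H1" using H1 H2 ab by auto
    then have "e \<in> pairs_of H1" using pair_in_pairs_of[OF ab(2)] ab(1) by simp
    then show ?case using Hs(5) H1(1) by blast
  qed
  then show ?thesis by (auto intro: Kr_closure.base)
qed

end
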